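(* For diagonal physical $Q=\operatorname{diag}(\lambda_1,\lambda_2,\lambda_3)$ with $-\tfrac13<\lambda_1\le\lambda_2\le\lambda_3<\tfrac23$, $\lambda_1+\lambda_2+\lambda_3=0$, the Lagrange multiplier $\mu_1$ of its optimal density satisfies $\mu_1\to-\infty$ as $\lambda_1\to-\tfrac13$; that is, for every $M>0$ there is $\eta>0$ such that $\lambda_1+\tfrac13<\eta$ implies $\mu_1<-M$.
   Context: Points of the unit sphere $\mathbb S^2$ are written $(x,y,z)$, and $\mathrm dS$ is surface measure. For a physical $Q$ (symmetric traceless with all eigenvalues in $(-\tfrac13,\tfrac23)$) the Ball–Majumdar potential is $f(Q)=\inf\int_{\mathbb S^2}\rho\ln\rho\,\mathrm dS$ over even probability densities $\rho$ with $\int(\mathbf n\otimes\mathbf n-\tfrac13I_3)\rho\,\mathrm dS=Q$. For diagonal physical $Q=\operatorname{diag}(\lambda_1,\lambda_2,\lambda_3)$ this infimum is attained by $\rho_Q(x,y,z)=\exp(\mu_1x^2+\mu_2y^2+\mu_3z^2)/Z$, $Z=\int_{\mathbb S^2}\exp(\mu_1x^2+\mu_2y^2+\mu_3z^2)\,\mathrm dS$, where the Lagrange multipliers $\mu_1,\mu_2,\mu_3\in\mathbb R$ satisfy $\mu_1+\mu_2+\mu_3=0$ and $\int x^2\rho_Q\,\mathrm dS=\lambda_1+\tfrac13$, $\int y^2\rho_Q\,\mathrm dS=\lambda_2+\tfrac13$, $\int z^2\rho_Q\,\mathrm dS=\lambda_3+\tfrac13$. *)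

theory Defs
  imports "HOL-Analysis.Analysis"
begin

text \<open>Integral over the unit sphere S^2 with respect to surface measure dS,
  written in spherical coordinates
  (x,y,z) = (sin t cos p, sin t sin p, cos t), dS = sin t dt dp,
  with t in [0,pi] and p in [0,2 pi].\<close>
definition sphere_integral :: "(real \<Rightarrow> real \<Rightarrow> real \<Rightarrow> real) \<Rightarrow> real" where
  "sphere_integral g =
     integral (cbox (0, 0) (pi, 2 * pi))
       (\<lambda>(t, p). g (sin t * cos p) (sin t * sin p) (cos t) * sin t)"

definition bm_weight :: "real \<Rightarrow> real \<Rightarrow> real \<Rightarrow> real \<Rightarrow> real \<Rightarrow> real \<Rightarrow> real" where
  "bm_weight \<mu>1 \<mu>2 \<mu>3 x y z = exp (\<mu>1 * x\<^sup>2 + \<mu>2 * y\<^sup>2 + \<mu>3 * z\<^sup>2)"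

definition bm_Z :: "real \<Rightarrow> real \<Rightarrow> real \<Rightarrow> real" where
  "bm_Z \<mu>1 \<mu>2 \<mu>3 = sphere_integral (bm_weight \<mu>1 \<mu>2 \<mu>3)"

definition bm_rho :: "real \<Rightarrow> real \<Rightarrow> real \<Rightarrow> real \<Rightarrow> real \<Rightarrow> real \<Rightarrow> real" where
  "bm_rho \<mu>1 \<mu>2 \<mu>3 x y z = bm_weight \<mu>1 \<mu>2 \<mu>3 x y z / bm_Z \<mu>1 \<mu>2 \<mu>3"

definition bm_multipliers :: "real \<Rightarrow> real \<Rightarrow> real \<Rightarrow> real \<Rightarrow> real \<Rightarrow> real \<Rightarrow> bool" where
  "bm_multipliers l1 l2 l3 \<mu>1 \<mu>2 \<mu>3 \<longleftrightarrow>
     \<mu>1 + \<mu>2 + \<mu>3 = 0 \<and>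
     sphere_integral (\<lambda>x y z. x\<^sup>2 * bm_rho \<mu>1 \<mu>2 \<mu>3 x y z) = l1 + 1/3 \<and>
     sphere_integral (\<lambda>x y z. y\<^sup>2 * bm_rho \<mu>1 \<mu>2 \<mu>3 x y z) = l2 + 1/3 \<and>
     sphere_integral (\<lambda>x y z. z\<^sup>2 * bm_rho \<mu>1 \<mu>2 \<mu>3 x y z) = l3 + 1/3"

end

theory Submission
  imports Defs
begin

abbreviation CC :: "(real \<times> real) set" where "CC \<equiv> cbox (0,0) (pi, 2*pi)"

definition Wf :: "real \<Rightarrow> real \<Rightarrow> real \<Rightarrow> real \<times> real \<Rightarrow> real" where
"Wf a b c z = exp (a * (sin (fst z) * cos (snd z))\<^sup>2 + b * (sin (fst z) * sin (snd z))\<^sup>2 + c * (cos (fst z))\<^sup>2)"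

lemma cont_Wf[continuous_intros]: "continuous_on S (Wf a b c)"
  unfolding Wf_def by (intro continuous_intros)

lemma Wf_pos: "Wf a b c z > 0" unfolding Wf_def by simp

lemma integral_div_real: "integral S (\<lambda>x. f x / c) = integral S f / (c::real)"
proof -
  have "(\<lambda>x. f x / c) = (\<lambda>x. (inverse c) *\<^sub>R f x)" by (auto simp: divide_inverse)
  then show ?thesis by (simp add: divide_inverse mult.commute)
qed

lemma integral_mult_real: "integral S (\<lambda>x. c * f x) = (c::real) * integral S f"
proof -
  have "(\<lambda>x. c * f x) = (\<lambda>x. c *\<^sub>R f x)" by auto
  then show ?thesis by simp
qed

lemma Z_eq: "bm_Z a b c = integral CC (\<lambda>z. Wf a b c z * sin (fst z))"
  unfolding bm_Z_def sphere_integral_def bm_weight_def Wf_def by (rule integral_cong) (simp add: case_prod_beta)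

lemma Ix_eq: "sphere_integral (\<lambda>x y z. x\<^sup>2 * bm_rho a b c x y z) =
   integral CC (\<lambda>z. (sin (fst z) * cos (snd z))\<^sup>2 * Wf a b c z * sin (fst z)) / bm_Z a b c"
  unfolding sphere_integral_def bm_rho_def bm_weight_def
  by (subst integral_div_real[symmetric], rule integral_cong) (simp add: case_prod_beta Wf_def)

lemma Iy_eq: "sphere_integral (\<lambda>x y z. y\<^sup>2 * bm_rho a b c x y z) =
   integral CC (\<lambda>z. (sin (fst z) * sin (snd z))\<^sup>2 * Wf a b c z * sin (fst z)) / bm_Z a b c"
  unfolding sphere_integral_def bm_rho_def bm_weight_def
  by (subst integral_div_real[symmetric], rule integral_cong) (simp add: case_prod_beta Wf_def)

lemma Iz_eq: "sphere_integral (\<lambda>x y z. z\<^sup>2 * bm_rho a b c x y z) =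
   integral CC (\<lambda>z. (cos (fst z))\<^sup>2 * Wf a b c z * sin (fst z)) / bm_Z a b c"
  unfolding sphere_integral_def bm_rho_def bm_weight_def
  by (subst integral_div_real[symmetric], rule integral_cong) (simp add: case_prod_beta Wf_def)

lemma intC: fixes f :: "real \<times> real \<Rightarrow> real" shows "continuous_on CC f \<Longrightarrow> f integrable_on CC"
  by (rule integrable_continuous)

lemma sin_nonneg_C: "z \<in> CC \<Longrightarrow> sin (fst z) \<ge> 0"
  by (cases z) (auto simp: cbox_Pair_iff intro!: sin_ge_zero)

lemma int_cos2: "integral {0..2*pi} (\<lambda>p. cos (2*p)) = 0"
proof -
  have "((\<lambda>p. cos (2*p)) has_integral ((\<lambda>p. sin (2*p)/2) (2*pi) - (\<lambda>p. sin (2*p)/2) 0)) {0..2*pi}"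
  proof (rule fundamental_theorem_of_calculus)
    show "0 \<le> 2*pi" by simp
    fix x :: real
    have "((\<lambda>p. sin (2*p)/2) has_real_derivative cos (2*x)) (at x)"
      by (auto intro!: derivative_eq_intros)
    then show "((\<lambda>p. sin (2*p)/2) has_vector_derivative cos (2*x)) (at x within {0..2*pi})"
      using has_real_derivative_iff_has_vector_derivative has_vector_derivative_at_within by blast
  qed
  moreover have "sin (2 * (2 * pi)) = 0" by (metis mult.assoc sin_two_pi sin_double mult_zero_left mult_zero_right)
  ultimately show ?thesis by (auto dest: integral_unique)
qed

lemma exp_sign: "X - Y = k * u \<Longrightarrow> (k::real) \<ge> 0 \<Longrightarrow> u * (exp X - exp Y) \<ge> 0"
proof (cases "u \<ge> 0")
  case True
  assume "X - Y = k * u" "k \<ge> 0"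
  then have "X \<ge> Y" using True by (metis diff_ge_0_iff_ge zero_le_mult_iff)
  then show ?thesis using True by simp
next
  case False
  assume "X - Y = k * u" "k \<ge> 0"
  then have "X \<le> Y" using False by (smt (verit) mult_nonneg_nonpos)
  then show ?thesis using False by (simp add: mult_nonpos_nonpos)
qed

lemma box_ne: "box (0::real,0::real) (pi, 2*pi) \<noteq> {}"
  by (auto simp: box_ne_empty Basis_prod_def)

lemma pos_integral:
  fixes f :: "real \<times> real \<Rightarrow> real"
  assumes "continuous_on CC f" "\<And>z. z \<in> CC \<Longrightarrow> f z \<ge> 0" "w \<in> CC" "f w > 0"
  shows "integral CC f > 0"
proof -
  have i: "(f has_integral integral CC f) CC" using intC[OF assms(1)] by auto
  have "integral CC f \<ge> 0" using integral_nonneg[OF intC[OF assms(1)]] assms(2) by blast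
  moreover have "integral CC f \<noteq> 0"
  proof
    assume "integral CC f = 0"
    then have "f w = 0" using has_integral_0_cbox_imp_0[OF assms(1) _ _ box_ne assms(3)] i assms(2)
      by (metis box_subset_cbox subsetD)
    then show False using assms(4) by simp
  qed
  ultimately show ?thesis by simp
qed

definition Jx where "Jx a b c = integral CC (\<lambda>z. (sin (fst z) * cos (snd z))\<^sup>2 * Wf a b c z * sin (fst z))"
definition Jy where "Jy a b c = integral CC (\<lambda>z. (sin (fst z) * sin (snd z))\<^sup>2 * Wf a b c z * sin (fst z))"
definition Jz where "Jz a b c = integral CC (\<lambda>z. (cos (fst z))\<^sup>2 * Wf a b c z * sin (fst z))"

lemma Jx_gt_Jy:
  assumes ab: "a > b"
  shows "Jx a b c > Jy a b c"
proof -
  define W0 where "W0 z = exp (c * (cos (fst z))\<^sup>2 + (a+b)/2 * (sin (fst z))\<^sup>2)" for z :: "real \<times> real"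
  define g1 where "g1 z = sin (fst z)^3 * ((cos (snd z))\<^sup>2 - (sin (snd z))\<^sup>2) * (Wf a b c z - W0 z)" for z
  define g0 where "g0 z = sin (fst z)^3 * ((cos (snd z))\<^sup>2 - (sin (snd z))\<^sup>2) * W0 z" for z
  have c1: "continuous_on CC g1" unfolding g1_def W0_def by (intro continuous_intros)
  have c0: "continuous_on CC g0" unfolding g0_def W0_def by (intro continuous_intros)
  have "Jx a b c - Jy a b c = integral CC (\<lambda>z. (sin (fst z) * cos (snd z))\<^sup>2 * Wf a b c z * sin (fst z)
           - (sin (fst z) * sin (snd z))\<^sup>2 * Wf a b c z * sin (fst z))"
    unfolding Jx_def Jy_def
    by (rule integral_diff[symmetric]; rule intC; intro continuous_intros)
  also have "\<dots> = integral CC (\<lambda>z. g1 z + g0 z)"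
    by (rule integral_cong) (simp add: g1_def g0_def algebra_simps power2_eq_square power3_eq_cube)
  also have "\<dots> = integral CC g1 + integral CC g0"
    by (rule integral_add; rule intC; fact)
  finally have eq: "Jx a b c - Jy a b c = integral CC g1 + integral CC g0" .
  have "integral CC g0 = integral (cbox 0 pi) (\<lambda>t. integral (cbox 0 (2*pi)) (\<lambda>p. g0 (t, p)))"
    by (rule integral_prod_continuous[OF c0])
  also have "\<dots> = integral (cbox 0 pi) (\<lambda>t. 0)"
  proof (rule integral_cong)
    fix t :: real
    have "integral (cbox 0 (2*pi)) (\<lambda>p. g0 (t, p))
        = integral {0..2*pi} (\<lambda>p. (sin t ^ 3 * W0 (t,0)) * cos (2*p))"
      unfolding cbox_interval by (rule integral_cong) (simp add: g0_def W0_def cos_double)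
    also have "\<dots> = 0" by (simp only: integral_mult_real int_cos2 mult_zero_right)
    finally show "integral (cbox 0 (2*pi)) (\<lambda>p. g0 (t, p)) = 0" .
  qed
  also have "\<dots> = 0" by simp
  finally have z0: "integral CC g0 = 0" .
  have "integral CC g1 > 0"
  proof (rule pos_integral[OF c1, of "(pi/2, 0)"])
    fix z :: "real \<times> real" assume zC: "z \<in> CC"
    obtain t p where z: "z = (t,p)" by (cases z)
    have st: "sin t \<ge> 0" using sin_nonneg_C[OF zC] z by simp
    have cs: "(cos p)\<^sup>2 = 1 - (sin p)\<^sup>2" by (simp add: cos_squared_eq)
    have "(a * (sin t * cos p)\<^sup>2 + b * (sin t * sin p)\<^sup>2 + c * (cos t)\<^sup>2)
          - (c * (cos t)\<^sup>2 + (a+b)/2 * (sin t)\<^sup>2)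
          = ((sin t)\<^sup>2 * (a - b) / 2) * ((cos p)\<^sup>2 - (sin p)\<^sup>2)"
      by (simp add: cs power_mult_distrib algebra_simps)
    then have "((cos p)\<^sup>2 - (sin p)\<^sup>2) * (Wf a b c z - W0 z) \<ge> 0"
      using ab unfolding z Wf_def W0_def by (intro exp_sign[where k="(sin t)\<^sup>2 * (a - b) / 2"]) auto
    then show "g1 z \<ge> 0" using st unfolding g1_def z
      by (simp add: mult.assoc)
  next
    show "(pi/2, 0) \<in> CC" by (simp add: cbox_Pair_iff)
    have "exp ((a+b)/2) < exp a" using ab by simp
    then show "g1 (pi/2, 0) > 0" by (simp add: g1_def W0_def Wf_def)
  qed
  with eq z0 show ?thesis by simp
qed

lemma inner_t:
  fixes a b c p :: real
  defines "kk \<equiv> a*(cos p)\<^sup>2 + b*(sin p)\<^sup>2 - c"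
  shows "integral {0..pi} (\<lambda>t. sin t * Wf a b c (t,p) * (1 - 2 * kk * (cos t)\<^sup>2)) = 2 * exp c"
proof -
  have "((\<lambda>t. sin t * Wf a b c (t,p) * (1 - 2 * kk * (cos t)\<^sup>2)) has_integral
        ((\<lambda>t. - cos t * Wf a b c (t,p)) pi - (\<lambda>t. - cos t * Wf a b c (t,p)) 0)) {0..pi}"
  proof (rule fundamental_theorem_of_calculus)
    show "0 \<le> pi" by simp
    fix x :: real
    have "((\<lambda>t. - cos t * Wf a b c (t,p)) has_real_derivative sin x * Wf a b c (x,p) * (1 - 2 * kk * (cos x)\<^sup>2)) (at x)"
      unfolding Wf_def fst_conv snd_conv kk_def
      by (auto intro!: derivative_eq_intros simp: algebra_simps power2_eq_square)
    then show "((\<lambda>t. - cos t * Wf a b c (t,p)) has_vector_derivative sin x * Wf a b c (x,p) * (1 - 2 * kk * (cos x)\<^sup>2)) (at x within {0..pi})"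
      using has_real_derivative_iff_has_vector_derivative has_vector_derivative_at_within by blast
  qed
  then show ?thesis by (auto dest!: integral_unique simp: Wf_def)
qed

lemma Jxy_gt_Jz:
  assumes ac: "a - c \<ge> 3/2" and bc: "b - c \<ge> 3/2"
  shows "Jx a b c + Jy a b c > 2 * Jz a b c"
proof -
  define k where "k p = a*(cos p)\<^sup>2 + b*(sin p)\<^sup>2 - c" for p :: real
  have kge: "k p \<ge> 3/2" for p
  proof -
    have "k p = (a - c) * (cos p)\<^sup>2 + (b - c) * (sin p)\<^sup>2"
      using sin_cos_squared_add[of p] unfolding k_def by algebra
    also have "\<dots> \<ge> 3/2 * (cos p)\<^sup>2 + 3/2 * (sin p)\<^sup>2"
      using ac bc by (intro add_mono mult_right_mono) auto
    also have "3/2 * (cos p)\<^sup>2 + 3/2 * (sin p)\<^sup>2 = 3/2"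
      using sin_cos_squared_add[of p] by algebra
    finally show ?thesis by simp
  qed
  define h where "h z = (1 - 3*(cos (fst z))\<^sup>2) * Wf a b c z * sin (fst z)" for z :: "real \<times> real"
  define g where "g z = sin (fst z) * Wf a b c z * (1 - 2 * k (snd z) * (cos (fst z))\<^sup>2)" for z :: "real \<times> real"
  have ch: "continuous_on CC h" unfolding h_def by (intro continuous_intros)
  have cg: "continuous_on CC g" unfolding g_def k_def by (intro continuous_intros)
  have "Jx a b c + Jy a b c - 2 * Jz a b c =
     integral CC (\<lambda>z. (sin (fst z) * cos (snd z))\<^sup>2 * Wf a b c z * sin (fst z)
                    + (sin (fst z) * sin (snd z))\<^sup>2 * Wf a b c z * sin (fst z))
     - integral CC (\<lambda>z. 2 * ((cos (fst z))\<^sup>2 * Wf a b c z * sin (fst z)))"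
    unfolding Jx_def Jy_def Jz_def integral_mult_real
    by (subst integral_add; (rule intC; intro continuous_intros)?) simp
  also have "\<dots> = integral CC (\<lambda>z. (sin (fst z) * cos (snd z))\<^sup>2 * Wf a b c z * sin (fst z)
                    + (sin (fst z) * sin (snd z))\<^sup>2 * Wf a b c z * sin (fst z)
                    - 2 * ((cos (fst z))\<^sup>2 * Wf a b c z * sin (fst z)))"
    by (rule integral_diff[symmetric]; rule intC; intro continuous_intros)
  also have "\<dots> = integral CC h"
  proof (rule integral_cong)
    fix z :: "real \<times> real"
    obtain t p where z: "z = (t,p)" by (cases z)
    have e1: "(sin t)\<^sup>2 = 1 - (cos t)\<^sup>2" by (simp add: sin_squared_eq)
    have e2: "(cos p)\<^sup>2 = 1 - (sin p)\<^sup>2" by (simp add: cos_squared_eq)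
    show "(sin (fst z) * cos (snd z))\<^sup>2 * Wf a b c z * sin (fst z)
                    + (sin (fst z) * sin (snd z))\<^sup>2 * Wf a b c z * sin (fst z)
                    - 2 * ((cos (fst z))\<^sup>2 * Wf a b c z * sin (fst z)) = h z"
      unfolding h_def z fst_conv snd_conv power_mult_distrib e1 e2 by (simp add: algebra_simps)
  qed
  also have "\<dots> \<ge> integral CC g"
  proof (rule integral_le[OF intC[OF cg] intC[OF ch]])
    fix z :: "real \<times> real" assume zC: "z \<in> CC"
    obtain t p where z: "z = (t,p)" by (cases z)
    have st: "sin t \<ge> 0" using sin_nonneg_C[OF zC] z by simp
    have "h z - g z = sin t * Wf a b c z * (cos t)\<^sup>2 * (2 * k p - 3)"
      unfolding h_def g_def z by (simp add: algebra_simps)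
    also have "\<dots> \<ge> 0" using st kge[of p] Wf_pos[of a b c z] by (intro mult_nonneg_nonneg) auto
    finally show "g z \<le> h z" by simp
  qed
  finally have ge: "Jx a b c + Jy a b c - 2 * Jz a b c \<ge> integral CC g" .
  have "integral CC g = integral (cbox 0 pi) (\<lambda>t. integral (cbox 0 (2*pi)) (\<lambda>p. g (t, p)))"
    by (rule integral_prod_continuous[OF cg])
  also have "\<dots> = integral (cbox 0 (2*pi)) (\<lambda>p. integral (cbox 0 pi) (\<lambda>t. g (t, p)))"
    by (rule integral_swap_continuous[where f="\<lambda>t p. g (t,p)"]) (simp add: cg)
  also have "\<dots> = integral (cbox 0 (2*pi)) (\<lambda>p. 2 * exp c)"
    unfolding cbox_interval
    by (rule integral_cong) (simp only: g_def k_def fst_conv snd_conv inner_t)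
  also have "\<dots> = 2 * pi * (2 * exp c)" by simp
  finally have "integral CC g > 0" by simp
  with ge show ?thesis by simp
qed

lemma Z_sum: "bm_Z a b c = Jx a b c + Jy a b c + Jz a b c"
proof -
  have "Jx a b c + Jy a b c + Jz a b c =
     integral CC (\<lambda>z. (sin (fst z) * cos (snd z))\<^sup>2 * Wf a b c z * sin (fst z)
                    + (sin (fst z) * sin (snd z))\<^sup>2 * Wf a b c z * sin (fst z))
     + integral CC (\<lambda>z. (cos (fst z))\<^sup>2 * Wf a b c z * sin (fst z))"
    unfolding Jx_def Jy_def Jz_def
    by (subst integral_add; (rule intC; intro continuous_intros)?) simp
  also have "\<dots> = integral CC (\<lambda>z. (sin (fst z) * cos (snd z))\<^sup>2 * Wf a b c z * sin (fst z)
                    + (sin (fst z) * sin (snd z))\<^sup>2 * Wf a b c z * sin (fst z)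
                    + (cos (fst z))\<^sup>2 * Wf a b c z * sin (fst z))"
    by (rule integral_add[symmetric]; rule intC; intro continuous_intros)
  also have "\<dots> = integral CC (\<lambda>z. Wf a b c z * sin (fst z))"
  proof (rule integral_cong)
    fix z :: "real \<times> real"
    obtain t p where z: "z = (t,p)" by (cases z)
    have e1: "(sin t)\<^sup>2 = 1 - (cos t)\<^sup>2" by (simp add: sin_squared_eq)
    have e2: "(cos p)\<^sup>2 = 1 - (sin p)\<^sup>2" by (simp add: cos_squared_eq)
    show "(sin (fst z) * cos (snd z))\<^sup>2 * Wf a b c z * sin (fst z)
                    + (sin (fst z) * sin (snd z))\<^sup>2 * Wf a b c z * sin (fst z)
                    + (cos (fst z))\<^sup>2 * Wf a b c z * sin (fst z) = Wf a b c z * sin (fst z)"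
      unfolding z fst_conv snd_conv power_mult_distrib e1 e2 by (simp add: algebra_simps)
  qed
  finally show ?thesis using Z_eq by simp
qed

lemma W_bounds:
  assumes "\<bar>a\<bar> \<le> A" "\<bar>b\<bar> \<le> A" "\<bar>c\<bar> \<le> A"
  shows "exp (-A) \<le> Wf a b c z \<and> Wf a b c z \<le> exp A"
proof -
  define X where "X = (sin (fst z) * cos (snd z))\<^sup>2"
  define Y where "Y = (sin (fst z) * sin (snd z))\<^sup>2"
  define V where "V = (cos (fst z))\<^sup>2"
  have s: "X + Y + V = 1"
    unfolding X_def Y_def V_def power_mult_distrib
    using sin_cos_squared_add[of "fst z"] sin_cos_squared_add[of "snd z"] by algebra
  have nn: "X \<ge> 0" "Y \<ge> 0" "V \<ge> 0" unfolding X_def Y_def V_def by auto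
  have l: "a * X \<ge> -A * X" "b * Y \<ge> -A * Y" "c * V \<ge> -A * V"
    using mult_right_mono[of "-A" a X] mult_right_mono[of "-A" b Y] mult_right_mono[of "-A" c V] assms nn
    by auto
  have u: "a * X \<le> A * X" "b * Y \<le> A * Y" "c * V \<le> A * V"
    using assms nn by (auto intro!: mult_right_mono)
  have e: "A * X + A * Y + A * V = A"
  proof -
    have "A * X + A * Y + A * V = A * (X + Y + V)" by (simp add: distrib_left)
    then show ?thesis by (simp add: s)
  qed
  have "a * X + b * Y + c * V \<ge> -A" using l e by linarith
  moreover have "a * X + b * Y + c * V \<le> A" using u e by linarith
  ultimately show ?thesis unfolding Wf_def X_def Y_def V_def by simp
qed

definition Sx where "Sx = integral CC (\<lambda>z. (sin (fst z) * cos (snd z))\<^sup>2 * sin (fst z))"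
definition S1 where "S1 = integral CC (\<lambda>z. sin (fst z))"

lemma Sx_pos: "Sx > 0"
  unfolding Sx_def
proof (rule pos_integral[of _ "(pi/2, 0)"])
  show "continuous_on CC (\<lambda>z. (sin (fst z) * cos (snd z))\<^sup>2 * sin (fst z))" by (intro continuous_intros)
  show "(pi/2, 0) \<in> CC" by (simp add: cbox_Pair_iff)
  fix z :: "real \<times> real" assume "z \<in> CC"
  then show "0 \<le> (sin (fst z) * cos (snd z))\<^sup>2 * sin (fst z)" using sin_nonneg_C by auto
qed simp

lemma S1_ge: "S1 \<ge> Sx"
  unfolding S1_def Sx_def
proof (rule integral_le; (rule intC; intro continuous_intros)?)
  fix z :: "real \<times> real" assume zC: "z \<in> CC"
  have "(sin (fst z) * cos (snd z))\<^sup>2 \<le> 1"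
    by (simp add: abs_square_le_1 abs_mult mult_le_one)
  then show "(sin (fst z) * cos (snd z))\<^sup>2 * sin (fst z) \<le> sin (fst z)"
    using sin_nonneg_C[OF zC] by (simp add: mult_left_le_one_le)
qed

lemma Jx_lower:
  assumes "\<bar>a\<bar> \<le> A" "\<bar>b\<bar> \<le> A" "\<bar>c\<bar> \<le> A"
  shows "Jx a b c \<ge> exp (-A) * Sx"
  unfolding Jx_def Sx_def integral_mult_real[symmetric]
proof (rule integral_le; (rule intC; intro continuous_intros)?)
  fix z :: "real \<times> real" assume zC: "z \<in> CC"
  have "exp (-A) \<le> Wf a b c z" using W_bounds[OF assms] by blast
  moreover have "(sin (fst z) * cos (snd z))\<^sup>2 * sin (fst z) \<ge> 0"
    using sin_nonneg_C[OF zC] by simp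
  ultimately have "exp (-A) * ((sin (fst z) * cos (snd z))\<^sup>2 * sin (fst z)) \<le>
      Wf a b c z * ((sin (fst z) * cos (snd z))\<^sup>2 * sin (fst z))"
    by (rule mult_right_mono)
  then show "exp (-A) * ((sin (fst z) * cos (snd z))\<^sup>2 * sin (fst z)) \<le>
      (sin (fst z) * cos (snd z))\<^sup>2 * Wf a b c z * sin (fst z)"
    by (simp only: mult.assoc mult.commute mult.left_commute)
qed

lemma Z_upper:
  assumes "\<bar>a\<bar> \<le> A" "\<bar>b\<bar> \<le> A" "\<bar>c\<bar> \<le> A"
  shows "bm_Z a b c \<le> exp A * S1"
  unfolding Z_eq S1_def integral_mult_real[symmetric]
proof (rule integral_le; (rule intC; intro continuous_intros)?)
  fix z :: "real \<times> real" assume zC: "z \<in> CC"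
  have "Wf a b c z \<le> exp A" using W_bounds[OF assms] by blast
  then show "Wf a b c z * sin (fst z) \<le> exp A * sin (fst z)"
    using sin_nonneg_C[OF zC] by (simp add: mult_right_mono)
qed

theorem lemma2p2:
  fixes M :: real
  assumes "M > 0"
  shows "\<exists>\<eta>>0. \<forall>l1 l2 l3 \<mu>1 \<mu>2 \<mu>3.
           -1/3 < l1 \<and> l1 \<le> l2 \<and> l2 \<le> l3 \<and> l3 < 2/3 \<and> l1 + l2 + l3 = 0 \<and>
           bm_multipliers l1 l2 l3 \<mu>1 \<mu>2 \<mu>3 \<and> l1 + 1/3 < \<eta>
           \<longrightarrow> \<mu>1 < - M"
proof -
  define A where "A = 4 * M + 3"
  define \<eta> where "\<eta> = exp (-A) * Sx / (exp A * S1)"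
  have Sxp: "Sx > 0" by (rule Sx_pos)
  have S1p: "S1 > 0" using Sx_pos S1_ge by linarith
  have etap: "\<eta> > 0" unfolding \<eta>_def using Sxp S1p by simp
  show ?thesis
  proof (intro exI[of _ \<eta>] conjI allI impI etap)
    fix l1 l2 l3 \<mu>1 \<mu>2 \<mu>3
    assume H: "-1/3 < l1 \<and> l1 \<le> l2 \<and> l2 \<le> l3 \<and> l3 < 2/3 \<and> l1 + l2 + l3 = 0 \<and>
           bm_multipliers l1 l2 l3 \<mu>1 \<mu>2 \<mu>3 \<and> l1 + 1/3 < \<eta>"
    then have l1g: "-1/3 < l1" and l12: "l1 \<le> l2" and l23: "l2 \<le> l3" and l1e: "l1 + 1/3 < \<eta>"
      and bm: "bm_multipliers l1 l2 l3 \<mu>1 \<mu>2 \<mu>3" by auto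
    let ?Z = "bm_Z \<mu>1 \<mu>2 \<mu>3"
    let ?X = "Jx \<mu>1 \<mu>2 \<mu>3"
    let ?Y = "Jy \<mu>1 \<mu>2 \<mu>3"
    let ?V = "Jz \<mu>1 \<mu>2 \<mu>3"
    have sum: "\<mu>1 + \<mu>2 + \<mu>3 = 0" and ex: "?X / ?Z = l1 + 1/3" and ey: "?Y / ?Z = l2 + 1/3"
      and ez: "?V / ?Z = l3 + 1/3"
      using bm unfolding bm_multipliers_def Ix_eq Iy_eq Iz_eq Jx_def Jy_def Jz_def by auto
    have Znn: "?Z \<ge> 0" unfolding Z_eq
      by (rule integral_nonneg; (rule intC; intro continuous_intros)?)
         (metis sin_nonneg_C Wf_pos less_imp_le mult_nonneg_nonneg)
    have "?Z \<noteq> 0"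
    proof
      assume "?Z = 0"
      then have "l1 + 1/3 = 0" using ex by simp
      then show False using l1g by simp
    qed
    with Znn have Zp: "?Z > 0" by simp
    have "?X / ?Z \<le> ?Y / ?Z" using l12 ex ey by simp
    then have XY: "?X \<le> ?Y" using Zp by (simp add: divide_le_cancel)
    show "\<mu>1 < - M"
    proof (rule ccontr)
      assume "\<not> \<mu>1 < - M"
      then have m1: "\<mu>1 \<ge> -M" by simp
      have m12: "\<mu>1 \<le> \<mu>2"
      proof (rule ccontr)
        assume "\<not> \<mu>1 \<le> \<mu>2"
        then have "?X > ?Y" using Jx_gt_Jy by simp
        then have "?X / ?Z > ?Y / ?Z" using Zp by (simp add: divide_strict_right_mono)
        then show False using ex ey l12 by simp
      qed
      have m2: "\<mu>2 < 2 * M + 3/2"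
      proof (rule ccontr)
        assume "\<not> \<mu>2 < 2 * M + 3/2"
        then have "\<mu>1 - \<mu>3 \<ge> 3/2" "\<mu>2 - \<mu>3 \<ge> 3/2" using sum m1 assms by linarith+
        then have "?X + ?Y > 2 * ?V" by (rule Jxy_gt_Jz)
        then have "?Y > ?V" using XY by simp
        then have "?Y / ?Z > ?V / ?Z" using Zp by (simp add: divide_strict_right_mono)
        then show False using ey ez l23 by simp
      qed
      have b1: "\<bar>\<mu>1\<bar> \<le> A" "\<bar>\<mu>2\<bar> \<le> A" "\<bar>\<mu>3\<bar> \<le> A"
        using m1 m12 m2 sum assms unfolding A_def by linarith+
      have lo: "?X \<ge> exp (-A) * Sx" by (rule Jx_lower[OF b1])
      have up: "?Z \<le> exp A * S1" by (rule Z_upper[OF b1])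
      have "\<eta> \<le> exp (-A) * Sx / ?Z"
        unfolding \<eta>_def using Zp up Sxp by (intro divide_left_mono) auto
      also have "\<dots> \<le> ?X / ?Z" using lo Zp by (simp add: divide_right_mono)
      finally have "\<eta> \<le> l1 + 1/3" using ex by simp
      then show False using l1e by simp
    qed
  qed
qed

end
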